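(* Assume $n\ge 3t+1$. In any execution of COOL, if $\eta^{[2]}=2$ then $\eta^{[3]}\le 1$.
   Context: Setting. $n$ processors indexed by $[1:n]$, pairwise joined by reliable private synchronous channels; recipients know senders. At most $t$ processors are dishonest, controlled by an adversary who may make them deviate arbitrarily (missing values replaced by a fixed default); the others are honest. Processor $i$ holds an $\ell$-bit initial message $\boldsymbol w_i$. $\phi$ is a default value different from every $\ell$-bit message. Logarithms are base 2. Code. $k=\lfloor t/5\rfloor+1$, $c=\lceil \max\{\ell,(t/5+1)\log(n+1)\}/k\rceil$. Messages are zero-padded to $kc$ bits and viewed in $GF(2^c)^k$. Integers in $[1:n]$ are identified with distinct nonzero elements of $GF(2^c)$; $\boldsymbol h_i\in GF(2^c)^k$ has entries $h_{i,j}=\prod_{p\in[1:k],\,p\ne j}\frac{i-p}{j-p}$ (field arithmetic). COOL, Phases 1–3 (honest processor $i$). Initialization: updated message $\boldsymbol w^{(i)}:=\boldsymbol w_i$, $y^{(i)}_j:=\boldsymbol h_j^{\mathsf T}\boldsymbol w_i$, $u_i(i):=1$. Phase 1. (a) Send $(y^{(i)}_j,y^{(i)}_i)$ to each $j\ne i$. (b) For $j\ne i$, link indicator $u_i(j):=1$ if the pair received from $j$ equals $(y^{(i)}_i,y^{(i)}_j)$, else $0$. Success indicator $s_i:=1$ if $\sum_{j=1}^n u_i(j)\ge n-t$; otherwise $s_i:=0$ and $\boldsymbol w^{(i)}:=\phi$. (c) Send $s_i$ to all; each processor records the indicator received from each $j$ (own for itself) and forms $\mathcal S_1=\{j:s_j=1\}$,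 $\mathcal S_0=\{j:s_j=0\}$ (views may differ between processors). Phase 2. If $s_i=1$: set $u_i(j):=0$ for all $j\in\mathcal S_0$; if now $\sum_j u_i(j)<n-t$, set $s_i:=0$, $\boldsymbol w^{(i)}:=\phi$ and send $s_i=0$ to all. Everyone overwrites recorded indicators with newly received ones and recomputes $\mathcal S_0,\mathcal S_1$. Phase 3 begins by repeating the steps of Phase 2 once more (followed by a vote and binary agreement, irrelevant here). Notation. For $p\in\{1,2,3\}$, $s^{[p]}_i$ is the value of honest processor $i$'s success indicator at the end of (the indicator-updating steps of) Phase $p$, and $\eta^{[p]}$ is the number of distinct values in $\{\boldsymbol w_i: i\text{ honest},\ s^{[p]}_i=1\}$ (initial messages). *)

theory Defs
  imports Complex_Main "HOL-Library.Cardinality"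
begin

definition cool_k :: "nat \<Rightarrow> nat" where
  "cool_k t = t div 5 + 1"

definition cool_c :: "nat \<Rightarrow> nat \<Rightarrow> nat \<Rightarrow> nat" where
  "cool_c n t l = nat \<lceil> max (real l) ((real t / 5 + 1) * log 2 (real n + 1)) / real (cool_k t) \<rceil>"

text \<open>alpha identifies integers with distinct nonzero field elements;
  h alpha k i j is the entry h_{i,j} of the Lagrange vector h_i.\<close>
definition cool_h :: "(nat \<Rightarrow> 'f::field) \<Rightarrow> nat \<Rightarrow> nat \<Rightarrow> nat \<Rightarrow> 'f" where
  "cool_h alpha k i j = (\<Prod>p\<in>{1..k} - {j}. (alpha i - alpha p) / (alpha j - alpha p))"

text \<open>Zero-pad an l-bit message (bool list) to k*c bits and cut it into k blocks of c bits;
  block j (j in [1:k]) is mapped to GF(2^c) by the bijection beta.\<close>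
definition cool_enc :: "(bool list \<Rightarrow> 'f) \<Rightarrow> nat \<Rightarrow> nat \<Rightarrow> bool list \<Rightarrow> nat \<Rightarrow> 'f" where
  "cool_enc beta k c m j = beta (take c (drop ((j - 1) * c) (m @ replicate (k * c - length m) False)))"

definition cool_code :: "(nat \<Rightarrow> 'f::field) \<Rightarrow> (bool list \<Rightarrow> 'f) \<Rightarrow> nat \<Rightarrow> nat \<Rightarrow> bool list \<Rightarrow> nat \<Rightarrow> 'f" where
  "cool_code alpha beta k c m i = (\<Sum>j\<in>{1..k}. cool_h alpha k i j * cool_enc beta k c m j)"

text \<open>Y j i = y^{(j)}_i, the i-th coded symbol of honest processor j.
  A j i : pair sent by (dishonest) processor j to processor i in Phase 1(a).
  R1 j i, R2 j i : success indicator sent by (dishonest) j to i in Phase 1(c) / Phase 2.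
  Honest senders' messages are determined by the protocol; adversarial values are used only
  for senders outside H.\<close>

definition cool_u1 :: "nat set \<Rightarrow> (nat \<Rightarrow> nat \<Rightarrow> 'f) \<Rightarrow> (nat \<Rightarrow> nat \<Rightarrow> 'f \<times> 'f) \<Rightarrow> nat \<Rightarrow> nat \<Rightarrow> bool" where
  "cool_u1 H Y A i j =
     (if j = i then True
      else (if j \<in> H then (Y j i, Y j j) else A j i) = (Y i i, Y i j))"

definition cool_s1 :: "nat \<Rightarrow> nat \<Rightarrow> nat set \<Rightarrow> (nat \<Rightarrow> nat \<Rightarrow> 'f) \<Rightarrow> (nat \<Rightarrow> nat \<Rightarrow> 'f \<times> 'f) \<Rightarrow> nat \<Rightarrow> bool" where
  "cool_s1 n t H Y A i = (n - t \<le> card {j \<in> {1..n}. cool_u1 H Y A i j})"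

text \<open>Indicator of j recorded by i after Phase 1(c).\<close>
definition cool_rec1 :: "nat \<Rightarrow> nat \<Rightarrow> nat set \<Rightarrow> (nat \<Rightarrow> nat \<Rightarrow> 'f) \<Rightarrow> (nat \<Rightarrow> nat \<Rightarrow> 'f \<times> 'f)
    \<Rightarrow> (nat \<Rightarrow> nat \<Rightarrow> bool) \<Rightarrow> nat \<Rightarrow> nat \<Rightarrow> bool" where
  "cool_rec1 n t H Y A R1 i j = (if j \<in> H then cool_s1 n t H Y A j else R1 j i)"

definition cool_u2 :: "nat \<Rightarrow> nat \<Rightarrow> nat set \<Rightarrow> (nat \<Rightarrow> nat \<Rightarrow> 'f) \<Rightarrow> (nat \<Rightarrow> nat \<Rightarrow> 'f \<times> 'f)
    \<Rightarrow> (nat \<Rightarrow> nat \<Rightarrow> bool) \<Rightarrow> nat \<Rightarrow> nat \<Rightarrow> bool" where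
  "cool_u2 n t H Y A R1 i j = (cool_u1 H Y A i j \<and> cool_rec1 n t H Y A R1 i j)"

definition cool_s2 :: "nat \<Rightarrow> nat \<Rightarrow> nat set \<Rightarrow> (nat \<Rightarrow> nat \<Rightarrow> 'f) \<Rightarrow> (nat \<Rightarrow> nat \<Rightarrow> 'f \<times> 'f)
    \<Rightarrow> (nat \<Rightarrow> nat \<Rightarrow> bool) \<Rightarrow> nat \<Rightarrow> bool" where
  "cool_s2 n t H Y A R1 i =
     (cool_s1 n t H Y A i \<and> n - t \<le> card {j \<in> {1..n}. cool_u2 n t H Y A R1 i j})"

text \<open>Indicator of j recorded by i after Phase 2 (honest j: its current indicator,
  since it either re-sent 0 or its old recorded value is unchanged).\<close>
definition cool_rec2 :: "nat \<Rightarrow> nat \<Rightarrow> nat set \<Rightarrow> (nat \<Rightarrow> nat \<Rightarrow> 'f) \<Rightarrow> (nat \<Rightarrow> nat \<Rightarrow> 'f \<times> 'f)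
    \<Rightarrow> (nat \<Rightarrow> nat \<Rightarrow> bool) \<Rightarrow> (nat \<Rightarrow> nat \<Rightarrow> bool) \<Rightarrow> nat \<Rightarrow> nat \<Rightarrow> bool" where
  "cool_rec2 n t H Y A R1 R2 i j = (if j \<in> H then cool_s2 n t H Y A R1 j else R2 j i)"

definition cool_u3 :: "nat \<Rightarrow> nat \<Rightarrow> nat set \<Rightarrow> (nat \<Rightarrow> nat \<Rightarrow> 'f) \<Rightarrow> (nat \<Rightarrow> nat \<Rightarrow> 'f \<times> 'f)
    \<Rightarrow> (nat \<Rightarrow> nat \<Rightarrow> bool) \<Rightarrow> (nat \<Rightarrow> nat \<Rightarrow> bool) \<Rightarrow> nat \<Rightarrow> nat \<Rightarrow> bool" where
  "cool_u3 n t H Y A R1 R2 i j = (cool_u2 n t H Y A R1 i j \<and> cool_rec2 n t H Y A R1 R2 i j)"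

definition cool_s3 :: "nat \<Rightarrow> nat \<Rightarrow> nat set \<Rightarrow> (nat \<Rightarrow> nat \<Rightarrow> 'f) \<Rightarrow> (nat \<Rightarrow> nat \<Rightarrow> 'f \<times> 'f)
    \<Rightarrow> (nat \<Rightarrow> nat \<Rightarrow> bool) \<Rightarrow> (nat \<Rightarrow> nat \<Rightarrow> bool) \<Rightarrow> nat \<Rightarrow> bool" where
  "cool_s3 n t H Y A R1 R2 i =
     (cool_s2 n t H Y A R1 i \<and> n - t \<le> card {j \<in> {1..n}. cool_u3 n t H Y A R1 R2 i j})"

definition cool_eta :: "nat set \<Rightarrow> (nat \<Rightarrow> bool list) \<Rightarrow> (nat \<Rightarrow> bool) \<Rightarrow> nat" where
  "cool_eta H w s = card (w ` {i \<in> H. s i})"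

end

theory Submission imports Defs "HOL-Computational_Algebra.Polynomial" begin

definition lagP :: "(nat \<Rightarrow> 'f::field) \<Rightarrow> nat \<Rightarrow> (nat \<Rightarrow> 'f) \<Rightarrow> 'f poly" where
 "lagP alpha k e = (\<Sum>j\<in>{1..k}. smult (e j) (\<Prod>p\<in>{1..k}-{j}. smult (inverse (alpha j - alpha p)) [:- alpha p, 1:]))"

lemma poly_lagP: "poly (lagP alpha k e) x = (\<Sum>j\<in>{1..k}. (\<Prod>p\<in>{1..k}-{j}. (x - alpha p)/(alpha j - alpha p)) * e j)"
  by (simp add: lagP_def poly_sum poly_prod divide_inverse mult.commute algebra_simps)

lemma code_eq: "cool_code alpha beta k c m i = poly (lagP alpha k (cool_enc beta k c m)) (alpha i)"
  unfolding cool_code_def cool_h_def poly_lagP by simp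

lemma deg_lagP: "degree (lagP alpha k e) \<le> k - 1"
  unfolding lagP_def
proof (intro degree_sum_le)
  fix j assume j: "j \<in> {1..k}"
  have "degree (\<Prod>p\<in>{1..k}-{j}. smult (inverse (alpha j - alpha p)) [:- alpha p, 1:])
      \<le> (\<Sum>p\<in>{1..k}-{j}. degree (smult (inverse (alpha j - alpha p)) [:- alpha p, 1:]))"
    by (rule degree_prod_sum_le[of "{1..k}-{j}", unfolded o_def]) simp
  also have "\<dots> \<le> (\<Sum>p\<in>{1..k}-{j}. 1)"
    by (intro sum_mono) (simp add: degree_smult_le)
  also have "\<dots> = k - 1" using j by simp
  finally show "degree (smult (e j) (\<Prod>p\<in>{1..k}-{j}. smult (inverse (alpha j - alpha p)) [:- alpha p, 1:])) \<le> k - 1"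
    using degree_smult_le order_trans by blast
qed simp

lemma lagP_node:
  assumes inj: "inj_on alpha {1..k}" and i: "i \<in> {1..k}"
  shows "poly (lagP alpha k e) (alpha i) = e i"
proof -
  have z: "(\<Prod>p\<in>{1..k}-{j}. (alpha i - alpha p)/(alpha j - alpha p)) * e j = 0"
    if "j \<in> {1..k}-{i}" for j
  proof -
    have "(\<Prod>p\<in>{1..k}-{j}. (alpha i - alpha p)/(alpha j - alpha p)) = 0"
      using that i by (intro prod_zero) auto
    then show ?thesis by simp
  qed
  have o: "(\<Prod>p\<in>{1..k}-{i}. (alpha i - alpha p)/(alpha i - alpha p)) = 1"
  proof (intro prod.neutral ballI)
    fix p assume "p \<in> {1..k}-{i}"
    then have "alpha i \<noteq> alpha p" using inj i by (auto dest: inj_onD)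
    then show "(alpha i - alpha p)/(alpha i - alpha p) = 1" by simp
  qed
  have "poly (lagP alpha k e) (alpha i) = (\<Prod>p\<in>{1..k}-{i}. (alpha i - alpha p)/(alpha i - alpha p)) * e i
     + (\<Sum>j\<in>{1..k}-{i}. (\<Prod>p\<in>{1..k}-{j}. (alpha i - alpha p)/(alpha j - alpha p)) * e j)"
    unfolding poly_lagP using i by (simp add: sum.remove)
  also have "\<dots> = e i"
  proof -
    have "(\<Sum>j\<in>{1..k}-{i}. (\<Prod>p\<in>{1..k}-{j}. (alpha i - alpha p)/(alpha j - alpha p)) * e j) = 0"
      using z by (intro sum.neutral) blast
    then show ?thesis using o by simp
  qed
  finally show ?thesis .
qed

lemma enc_inj:
  assumes lm: "length m = l" and lm': "length m' = l" and lkc: "l \<le> k * c"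
    and binj: "inj_on beta {bs. length bs = c}"
    and eq: "\<forall>j\<in>{1..k}. cool_enc beta k c m j = cool_enc beta k c m' j"
  shows "m = m'"
proof -
  define pm where "pm = m @ replicate (k * c - l) False"
  define pm' where "pm' = m' @ replicate (k * c - l) False"
  have lp: "length pm = k * c" "length pm' = k * c" using lm lm' lkc by (auto simp: pm_def pm'_def)
  have "pm = pm'"
  proof (rule nth_equalityI)
    show "length pm = length pm'" using lp by simp
    fix i assume "i < length pm"
    then have ik: "i < k * c" using lp by simp
    then have c0: "c > 0" by (cases c) auto
    have idk: "i div c < k" using ik c0 by (simp add: div_less_iff_less_mult mult.commute)
    define j where "j = i div c + 1"
    have j: "j \<in> {1..k}" using idk by (simp add: j_def)
    have jm: "(j - 1) * c + c \<le> k * c" using idk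
      by (simp add: j_def) (metis add.commute mult_Suc mult_le_mono1 Suc_leI)
    have lb: "length (take c (drop ((j - 1) * c) pm)) = c" "length (take c (drop ((j - 1) * c) pm')) = c"
      using lp jm by auto
    have "beta (take c (drop ((j - 1) * c) pm)) = beta (take c (drop ((j - 1) * c) pm'))"
      using eq j lm lm' by (simp add: cool_enc_def pm_def pm'_def)
    then have blk: "take c (drop ((j - 1) * c) pm) = take c (drop ((j - 1) * c) pm')"
      using binj lb by (auto dest: inj_onD)
    have im: "i mod c < c" using c0 by simp
    have ie: "(j - 1) * c + i mod c = i" by (simp add: j_def)
    have le: "(j - 1) * c \<le> k * c" using jm by linarith
    have "take c (drop ((j - 1) * c) pm) ! (i mod c) = pm ! ((j - 1) * c + i mod c)"
      using im le lp by simp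
    then have "pm ! i = take c (drop ((j - 1) * c) pm) ! (i mod c)" using ie by simp
    also have "\<dots> = take c (drop ((j - 1) * c) pm') ! (i mod c)" using blk by simp
    also have "take c (drop ((j - 1) * c) pm') ! (i mod c) = pm' ! ((j - 1) * c + i mod c)"
      using im le lp by simp
    also have "\<dots> = pm' ! i" using ie by simp
    finally show "pm ! i = pm' ! i" .
  qed
  then have "take l pm = take l pm'" by simp
  then show ?thesis using lm lm' by (simp add: pm_def pm'_def)
qed

lemma agree_bound:
  fixes alpha :: "nat \<Rightarrow> 'f::field"
  assumes ainj: "inj_on alpha {1..n}" and kn: "k \<le> n"
    and lm: "length m = l" and lm': "length m' = l" and lkc: "l \<le> k * c"
    and binj: "inj_on beta {bs. length bs = c}" and ne: "m \<noteq> m'"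
  shows "card {p\<in>{1..n}. cool_code alpha beta k c m p = cool_code alpha beta k c m' p} \<le> k - 1"
proof -
  define Q where "Q = lagP alpha k (cool_enc beta k c m) - lagP alpha k (cool_enc beta k c m')"
  have ink: "inj_on alpha {1..k}" using kn by (intro inj_on_subset[OF ainj]) auto
  have Q0: "Q \<noteq> 0"
  proof
    assume "Q = 0"
    then have "\<forall>j\<in>{1..k}. cool_enc beta k c m j = cool_enc beta k c m' j"
      using lagP_node[OF ink] by (metis Q_def eq_iff_diff_eq_0)
    then show False using enc_inj[OF lm lm' lkc binj] ne by blast
  qed
  let ?G = "{p\<in>{1..n}. cool_code alpha beta k c m p = cool_code alpha beta k c m' p}"
  have "card ?G = card (alpha ` ?G)"
    using ainj by (intro card_image[symmetric] inj_on_subset[OF ainj]) auto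
  also have "\<dots> \<le> card {x. poly Q x = 0}"
    by (intro card_mono poly_roots_finite Q0) (auto simp: Q_def code_eq)
  also have "\<dots> \<le> degree Q" by (rule card_poly_roots_bound[OF Q0])
  also have "\<dots> \<le> k - 1" unfolding Q_def
    using degree_diff_le deg_lagP by blast
  finally show ?thesis .
qed


lemma count_le:
  assumes "finite B" "finite D" "{j\<in>U. P j} \<subseteq> D \<union> B" "m \<le> card {j\<in>U. P j}"
  shows "m \<le> card D + card B"
proof -
  have "card {j\<in>U. P j} \<le> card (D \<union> B)" using assms by (intro card_mono) auto
  also have "\<dots> \<le> card D + card B" by (rule card_Un_le)
  finally show ?thesis using assms(4) by linarith
qed

lemma card_filter_sum: "finite B \<Longrightarrow> card {y\<in>B. P y} = (\<Sum>y\<in>B. if P y then 1 else 0)"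
  by (simp add: sum.If_cases Int_def)

lemma card_swap:
  assumes "finite A" "finite B"
  shows "(\<Sum>x\<in>A. card {y\<in>B. P x y}) = (\<Sum>y\<in>B. card {x\<in>A. P x y})"
  using assms by (simp add: card_filter_sum sum.swap[of _ A B])

lemma lkc: "l \<le> cool_k t * cool_c n t l"
proof -
  have k0: "real (cool_k t) > 0" by (simp add: cool_k_def)
  have "real l / real (cool_k t) \<le> max (real l) ((real t / 5 + 1) * log 2 (real n + 1)) / real (cool_k t)"
    using k0 by (intro divide_right_mono) auto
  also have "\<dots> \<le> real (cool_c n t l)" unfolding cool_c_def by (rule real_nat_ceiling_ge)
  finally have "real l \<le> real (cool_k t) * real (cool_c n t l)"
    using k0 by (simp add: field_simps)
  then show ?thesis by (simp flip: of_nat_mult)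
qed


theorem lemma12:
  fixes n t l :: nat
    and alpha :: "nat \<Rightarrow> 'f::{field,finite}"
    and beta :: "bool list \<Rightarrow> 'f"
    and H :: "nat set"
    and w :: "nat \<Rightarrow> bool list"
    and A :: "nat \<Rightarrow> nat \<Rightarrow> 'f \<times> 'f"
    and R1 R2 :: "nat \<Rightarrow> nat \<Rightarrow> bool"
  defines "k \<equiv> cool_k t"
    and "c \<equiv> cool_c n t l"
  defines "Y \<equiv> (\<lambda>j i. cool_code alpha beta k c (w j) i)"
  assumes n_ge: "n \<ge> 3 * t + 1"
    and field_card: "CARD('f) = 2 ^ c"
    and alpha_inj: "inj_on alpha {1..n}"
    and alpha_nz: "\<forall>i\<in>{1..n}. alpha i \<noteq> 0"
    and beta_bij: "bij_betw beta {bs. length bs = c} UNIV"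
    and H_sub: "H \<subseteq> {1..n}"
    and dishonest: "card ({1..n} - H) \<le> t"
    and msgs: "\<forall>i\<in>H. length (w i) = l"
    and eta2: "cool_eta H w (cool_s2 n t H Y A R1) = 2"
  shows "cool_eta H w (cool_s3 n t H Y A R1 R2) \<le> 1"
proof (rule ccontr)
  assume contra: "\<not> ?thesis"
  define U where "U = {1..n}"
  define D where "D = U - H"
  define d where "d = card D"
  define C where "C = (\<lambda>m p. cool_code alpha beta k c m p)"
  define Agr where "Agr = (\<lambda>m m'. {p\<in>U. C m p = C m' p})"
  define u1 where "u1 = cool_u1 H Y A"
  define s1 where "s1 = cool_s1 n t H Y A"
  define s2 where "s2 = cool_s2 n t H Y A R1"
  define s3 where "s3 = cool_s3 n t H Y A R1 R2"
  have finU: "finite U" by (simp add: U_def)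
  have finH: "finite H" using H_sub finite_subset by blast
  have HU: "H \<subseteq> U" using H_sub by (simp add: U_def)
  have dt: "d \<le> t" using dishonest by (simp add: d_def D_def U_def)
  have finD: "finite D" by (simp add: D_def finU)
  have cardH: "card H + d = n"
    using HU finU card_Diff_subset[OF finite_subset[OF HU finU] HU]
      card_mono[OF finU HU] by (simp add: d_def D_def U_def)
  have kn: "k \<le> n" using n_ge by (simp add: k_def cool_k_def)
  have k5: "5 * (k - 1) \<le> t" by (simp add: k_def cool_k_def)
  have lk: "l \<le> k * c" unfolding k_def c_def by (rule lkc)
  have binj: "inj_on beta {bs. length bs = c}" using beta_bij bij_betw_imp_inj_on by blast
  have AgrC: "Agr m m' = Agr m' m" for m m' by (auto simp: Agr_def)
  have finAgr: "finite (Agr m m')" for m m' by (simp add: Agr_def finU)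
  have AB: "card (Agr (w i) (w j)) \<le> k - 1" if "i \<in> H" "j \<in> H" "w i \<noteq> w j" for i j
    unfolding Agr_def C_def U_def
    by (rule agree_bound[OF alpha_inj kn _ _ lk binj]) (use that msgs in auto)
  have U1: "i \<in> Agr (w i) (w j) \<and> j \<in> Agr (w i) (w j)"
    if "i \<in> H" "j \<in> H" "u1 i j" "w i \<noteq> w j" for i j
  proof -
    have "i \<noteq> j" using that by auto
    then have "Y j i = Y i i \<and> Y j j = Y i j" using that by (simp add: u1_def cool_u1_def)
    then show ?thesis using that HU by (auto simp: Agr_def Y_def C_def)
  qed
  have s32: "s3 i \<Longrightarrow> s2 i" for i by (simp add: s3_def s2_def cool_s3_def)
  have s21: "s2 i \<Longrightarrow> s1 i" for i by (simp add: s1_def s2_def cool_s2_def)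
  from eta2 obtain a b where ab: "a \<noteq> b" and img2: "w ` {i\<in>H. s2 i} = {a, b}"
    unfolding cool_eta_def s2_def card_2_iff by blast
  have img3: "w ` {i\<in>H. s3 i} = {a, b}"
  proof -
    have sub: "w ` {i\<in>H. s3 i} \<subseteq> {a, b}" using img2 s32 by blast
    have "card (w ` {i\<in>H. s3 i}) \<ge> 2" using contra by (simp add: cool_eta_def s3_def)
    then show ?thesis using sub
      by (metis ab card_2_iff card_mono card_seteq finite.emptyI finite.insertI)
  qed
  have nt: "d \<le> n - t" using dt n_ge by linarith
  have side: "n - t \<le> d + card {i\<in>H. s2 i \<and> w i = a'} + card ({i\<in>H. s2 i \<and> w i = b'} \<inter> Agr a' b')
     \<and> int (card ({i\<in>H. s2 i \<and> w i = a'} - Agr a' b')) * (int (n - t - d) - int (card {i\<in>H. s1 i \<and> w i = a'}))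
        \<le> int (card {i\<in>H. w i \<noteq> a' \<and> w i \<noteq> b'}) * int (k - 1)"
    if ab': "{a', b'} = {a, b}" "a' \<noteq> b'" and ia: "ia \<in> H" "s3 ia" "w ia = a'" for a' b' ia
  proof
    let ?X = "{i\<in>H. s2 i \<and> w i = a'}"
    let ?Y = "{i\<in>H. s2 i \<and> w i = b'}"
    let ?S = "Agr a' b'"
    let ?A1 = "{i\<in>H. s1 i \<and> w i = a'}"
    let ?O = "{i\<in>H. w i \<noteq> a' \<and> w i \<noteq> b'}"
    have img2': "w ` {i\<in>H. s2 i} = {a', b'}" using img2 ab' by simp
    have finX: "finite ?X" "finite ?Y" "finite ?A1" "finite ?O" using finH by auto
    have "{j\<in>U. cool_u3 n t H Y A R1 R2 ia j} \<subseteq> D \<union> (?X \<union> (?Y \<inter> ?S))"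
    proof
      fix j assume j: "j \<in> {j\<in>U. cool_u3 n t H Y A R1 R2 ia j}"
      show "j \<in> D \<union> (?X \<union> (?Y \<inter> ?S))"
      proof (cases "j \<in> H")
        case False then show ?thesis using j by (simp add: D_def)
      next
        case True
        have sj: "s2 j" and uj: "u1 ia j" using j True
          by (auto simp: cool_u3_def cool_u2_def cool_rec2_def s2_def u1_def)
        have "w j \<in> {a', b'}" using img2' True sj by blast
        moreover have "w j = b' \<Longrightarrow> j \<in> ?S" using U1[OF ia(1) True uj] ia ab' by auto
        ultimately show ?thesis using True sj by auto
      qed
    qed
    moreover have "n - t \<le> card {j\<in>U. cool_u3 n t H Y A R1 R2 ia j}"
      using ia(2) by (simp add: s3_def cool_s3_def U_def)
    ultimately have "n - t \<le> d + card (?X \<union> (?Y \<inter> ?S))"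
      unfolding d_def by (intro count_le) (use finX finD in auto)
    also have "\<dots> \<le> d + (card ?X + card (?Y \<inter> ?S))" using card_Un_le by simp
    finally show "n - t \<le> d + card ?X + card (?Y \<inter> ?S)" by simp
    define OL where "OL = (\<lambda>x. card {q\<in>?O. u1 x q})"
    have ph2: "int (n - t - d) - int (card ?A1) \<le> int (OL x)" if x: "x \<in> ?X - ?S" for x
    proof -
      have "{j\<in>U. cool_u2 n t H Y A R1 x j} \<subseteq> D \<union> (?A1 \<union> {q\<in>?O. u1 x q})"
      proof
        fix j assume j: "j \<in> {j\<in>U. cool_u2 n t H Y A R1 x j}"
        show "j \<in> D \<union> (?A1 \<union> {q\<in>?O. u1 x q})"
        proof (cases "j \<in> H")
          case False then show ?thesis using j by (simp add: D_def)
        next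
          case True
          have sj: "s1 j" and uj: "u1 x j" using j True
            by (auto simp: cool_u2_def cool_rec1_def s1_def u1_def)
          have "w j \<noteq> b'" using U1[of x j] x True uj ab' by auto
          then show ?thesis using True sj uj by auto
        qed
      qed
      moreover have "n - t \<le> card {j\<in>U. cool_u2 n t H Y A R1 x j}"
        using x by (simp add: s2_def cool_s2_def U_def)
      ultimately have "n - t \<le> d + card (?A1 \<union> {q\<in>?O. u1 x q})"
        unfolding d_def by (intro count_le) (use finX finD finH in auto)
      also have "\<dots> \<le> d + (card ?A1 + OL x)" using card_Un_le by (simp add: OL_def)
      finally show ?thesis using nt by linarith
    qed
    have "int (card (?X - ?S)) * (int (n - t - d) - int (card ?A1))
        = (\<Sum>x\<in>?X - ?S. (int (n - t - d) - int (card ?A1)))" by simp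
    also have "\<dots> \<le> (\<Sum>x\<in>?X - ?S. int (OL x))" by (rule sum_mono) (rule ph2)
    also have "\<dots> = int (\<Sum>x\<in>?X - ?S. OL x)" by simp
    also have "(\<Sum>x\<in>?X - ?S. OL x) = (\<Sum>q\<in>?O. card {x\<in>?X - ?S. u1 x q})"
      unfolding OL_def by (rule card_swap) (use finX in auto)
    also have "\<dots> \<le> (\<Sum>q\<in>?O. k - 1)"
    proof (rule sum_mono)
      fix q assume q: "q \<in> ?O"
      have "{x\<in>?X - ?S. u1 x q} \<subseteq> Agr (w ia) (w q)" using U1 q ia by force
      then have "card {x\<in>?X - ?S. u1 x q} \<le> card (Agr (w ia) (w q))"
        by (intro card_mono finAgr)
      also have "\<dots> \<le> k - 1" using AB[of ia q] q ia by auto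
      finally show "card {x\<in>?X - ?S. u1 x q} \<le> k - 1" .
    qed
    also have "\<dots> = card ?O * (k - 1)" by simp
    finally show "int (card (?X - ?S)) * (int (n - t - d) - int (card ?A1)) \<le> int (card ?O) * int (k - 1)"
      by simp
  qed
  obtain ia where ia: "ia \<in> H" "s3 ia" "w ia = a" using img3 by (metis (mono_tags, lifting) imageE insertI1 mem_Collect_eq)
  obtain ib where ib: "ib \<in> H" "s3 ib" "w ib = b" using img3 by (metis (mono_tags, lifting) imageE insertI1 insertI2 mem_Collect_eq)
  have sa: "{a, b} = {a, b}" by simp
  have sb: "{b, a} = {a, b}" by auto
  note SA = side[OF sa ab ia] and SB = side[OF sb ab[symmetric] ib]
  define X where "X = {i\<in>H. s2 i \<and> w i = a}"
  define Yb where "Yb = {i\<in>H. s2 i \<and> w i = b}"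
  define S where "S = Agr a b"
  define A1 where "A1 = {i\<in>H. s1 i \<and> w i = a}"
  define B1 where "B1 = {i\<in>H. s1 i \<and> w i = b}"
  define Ot where "Ot = {i\<in>H. w i \<noteq> a \<and> w i \<noteq> b}"
  have OO: "{i\<in>H. w i \<noteq> b \<and> w i \<noteq> a} = Ot" by (auto simp: Ot_def)
  have SS: "Agr b a = S" using AgrC by (simp add: S_def)
  have P3a: "n - t \<le> d + card X + card (Yb \<inter> S)" and Qa:
    "int (card (X - S)) * (int (n - t - d) - int (card A1)) \<le> int (card Ot) * int (k - 1)"
    using SA by (simp_all add: X_def Yb_def S_def A1_def Ot_def)
  have P3b: "n - t \<le> d + card Yb + card (X \<inter> S)" and Qb:
    "int (card (Yb - S)) * (int (n - t - d) - int (card B1)) \<le> int (card Ot) * int (k - 1)"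
    using SB OO SS by (simp_all add: X_def Yb_def A1_def B1_def)
  have finS: "finite S" by (simp add: S_def finAgr)
  have cS: "card S \<le> k - 1" using AB[OF ia(1) ib(1)] ia ib ab by (simp add: S_def)
  have "card (X \<inter> S) + card (Yb \<inter> S) = card ((X \<inter> S) \<union> (Yb \<inter> S))"
    by (rule card_Un_disjoint[symmetric]) (use finS ab in \<open>auto simp: X_def Yb_def\<close>)
  also have "\<dots> \<le> card S" by (rule card_mono[OF finS]) auto
  finally have sxy: "card (X \<inter> S) + card (Yb \<inter> S) \<le> k - 1" using cS by linarith
  have finXY: "finite X" "finite Yb" using finH by (auto simp: X_def Yb_def)
  have xs: "card (X - S) = card X - card (X \<inter> S)" using finXY by (simp add: card_Diff_subset_Int)
  have ys: "card (Yb - S) = card Yb - card (Yb \<inter> S)" using finXY by (simp add: card_Diff_subset_Int)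
  have xle: "card (X \<inter> S) \<le> card X" "card (Yb \<inter> S) \<le> card Yb" using finXY by (auto intro: card_mono)
  have "card (A1 \<union> B1 \<union> Ot) = card A1 + card B1 + card Ot"
  proof -
    have "card (A1 \<union> B1) = card A1 + card B1"
      by (rule card_Un_disjoint) (use finH ab in \<open>auto simp: A1_def B1_def\<close>)
    moreover have "card (A1 \<union> B1 \<union> Ot) = card (A1 \<union> B1) + card Ot"
      by (rule card_Un_disjoint) (use finH ab in \<open>auto simp: A1_def B1_def Ot_def\<close>)
    ultimately show ?thesis by simp
  qed
  moreover have "card (A1 \<union> B1 \<union> Ot) \<le> card H" using finH by (intro card_mono) (auto simp: A1_def B1_def Ot_def)
  ultimately have hon: "card A1 + card B1 + card Ot \<le> n - d" using cardH by linarith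
  define K where "K = int (k - 1)"
  define N where "N = int (n - t - d)"
  define xa where "xa = int (card (X - S))"
  define yb where "yb = int (card (Yb - S))"
  define pa where "pa = N - int (card A1)"
  define pb where "pb = N - int (card B1)"
  define oc where "oc = int (card Ot)"
  have K5: "5 * K \<le> int t" using k5 by (simp add: K_def)
  have Nt: "N \<ge> int t + 1" using n_ge dt by (simp add: N_def)
  have xa: "xa \<ge> N - K" using P3a xs xle sxy nt by (simp add: xa_def N_def K_def)
  have yb: "yb \<ge> N - K" using P3b ys xle sxy nt by (simp add: yb_def N_def K_def)
  have pab: "pa + pb \<ge> 1 + oc" using hon n_ge dt by (simp add: pa_def pb_def N_def oc_def)
  have Qa': "xa * pa \<le> oc * K" using Qa by (simp add: xa_def pa_def N_def oc_def K_def)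
  have Qb': "yb * pb \<le> oc * K" using Qb by (simp add: yb_def pb_def N_def oc_def K_def)
  have o0: "oc \<ge> 0" by (simp add: oc_def)
  have K0: "K \<ge> 0" by (simp add: K_def)
  have fin: False if xp: "x * p \<le> oc * K" and xg: "x \<ge> N - K" and pg: "2 * p \<ge> 1 + oc" for x p :: int
  proof -
    have x2: "x \<ge> 2 * K + 1" using xg Nt K5 by linarith
    have "x * (1 + oc) \<le> x * (2 * p)" using x2 K0 pg by (intro mult_left_mono) auto
    moreover have "(2 * K + 1) * (1 + oc) \<le> x * (1 + oc)" using x2 o0 by (intro mult_right_mono) auto
    ultimately have "(2 * K + 1) * (1 + oc) \<le> 2 * (oc * K)" using xp by (simp add: algebra_simps)
    then show False using o0 K0 by (simp add: algebra_simps)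
  qed
  show False
  proof (cases "pa \<ge> pb")
    case True then show False using fin[OF Qa' xa] pab by linarith
  next
    case False then show False using fin[OF Qb' yb] pab by linarith
  qed
qed

end
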